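(* Let $\Gamma_2$ be a finite alphabet and $n\in\mathbb N$. There is a pushdown automaton with $3n+3$ states and stack alphabet consisting of two symbols, in whose runs the stack height never exceeds $n$, whose language is exactly $(\Gamma_2)^{2^{n+1}}$.
   Context: A pushdown automaton has transitions labelled by a letter or $\epsilon$ and a stack operation (push a symbol, pop a symbol, or no operation); it accepts a word if there is a run from the initial state with empty stack reading the word and ending in a final state with empty stack. *)

theory Defs
  imports Main
begin

datatype 's stack_op = Push 's | Pop 's | NoOp

record ('q, 'a, 's) pda =
  states :: "'q set"
  input :: "'a set"
  stack_alph :: "'s set"
  trans :: "('q \<times> 'a option \<times> 's stack_op \<times> 'q) set"
  init :: 'q
  final :: "'q set"

definition wf_pda :: "('q, 'a, 's) pda \<Rightarrow> bool" where
  "wf_pda A \<longleftrightarrow> finite (states A) \<and> finite (input A) \<and> finite (stack_alph A) \<and>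
     finite (trans A) \<and> init A \<in> states A \<and> final A \<subseteq> states A \<and>
     (\<forall>(p, l, op, q) \<in> trans A. p \<in> states A \<and> q \<in> states A \<and>
        (\<forall>a. l = Some a \<longrightarrow> a \<in> input A) \<and>
        (\<forall>z. op = Push z \<longrightarrow> z \<in> stack_alph A) \<and>
        (\<forall>z. op = Pop z \<longrightarrow> z \<in> stack_alph A))"

fun apply_op :: "'s stack_op \<Rightarrow> 's list \<Rightarrow> 's list \<Rightarrow> bool" where
  "apply_op (Push z) w w' \<longleftrightarrow> w' = z # w"
| "apply_op (Pop z) w w' \<longleftrightarrow> w = z # w'"
| "apply_op NoOp w w' \<longleftrightarrow> w' = w"

text \<open>One step between configurations (state, stack; top of stack = head), reading
  the word given (empty for epsilon).\<close>
definition step :: "('q, 'a, 's) pda \<Rightarrow> 'q \<times> 's list \<Rightarrow> 'a list \<Rightarrow> 'q \<times> 's list \<Rightarrow> bool" where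
  "step A c u c' \<longleftrightarrow> (\<exists>l op. (fst c, l, op, fst c') \<in> trans A \<and>
      u = (case l of None \<Rightarrow> [] | Some a \<Rightarrow> [a]) \<and> apply_op op (snd c) (snd c'))"

inductive run :: "('q, 'a, 's) pda \<Rightarrow> 'q \<times> 's list \<Rightarrow> 'a list \<Rightarrow> 'q \<times> 's list \<Rightarrow> bool"
  for A where
  run_refl: "run A c [] c"
| run_step: "run A c w c' \<Longrightarrow> step A c' u c'' \<Longrightarrow> run A c (w @ u) c''"

definition lang :: "('q, 'a, 's) pda \<Rightarrow> 'a list set" where
  "lang A = {w. \<exists>q \<in> final A. run A (init A, []) w (q, [])}"

definition stack_bounded :: "('q, 'a, 's) pda \<Rightarrow> nat \<Rightarrow> bool" where
  "stack_bounded A n \<longleftrightarrow> (\<forall>w c. run A (init A, []) w c \<longrightarrow> length (snd c) \<le> n)"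

end

theory Submission
  imports Defs
begin

definition TT :: "'a set \<Rightarrow> nat \<Rightarrow> (nat \<times> 'a option \<times> nat stack_op \<times> nat) set" where
  "TT G n = (\<lambda>a. (0, Some a, NoOp, 1)) ` G \<union> (\<lambda>a. (1, Some a, NoOp, 2)) ` G
    \<union> (\<lambda>k. (3*(k+1), None, Push 0, 3*k)) ` {..<n}
    \<union> (\<lambda>k. (3*k+2, None, Pop 0, 3*(k+1)+1)) ` {..<n}
    \<union> (\<lambda>k. (3*(k+1)+1, None, Push 1, 3*k)) ` {..<n}
    \<union> (\<lambda>k. (3*k+2, None, Pop 1, 3*(k+1)+2)) ` {..<n}"

definition AA :: "'a set \<Rightarrow> nat \<Rightarrow> (nat, 'a, nat) pda" where
  "AA G n = \<lparr>states = {..<3*n+3}, input = G, stack_alph = {0,1}, trans = TT G n,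
     init = 3*n, final = {3*n+2}\<rparr>"

fun vv :: "nat \<Rightarrow> nat list \<Rightarrow> nat" where
  "vv j [] = 0"
| "vv j (b # s) = b * 2^(j+1) + vv (Suc j) s"

lemma run_trans: "run A c' v c'' \<Longrightarrow> run A c w c' \<Longrightarrow> run A c (w @ v) c''"
proof (induction rule: run.induct)
  case (run_refl c) then show ?case by simp
next
  case (run_step c1 w1 c2 u c3)
  then show ?case using run.run_step[of A c "w @ w1" c2 u c3] by simp
qed

lemma run_single: "step A c u c' \<Longrightarrow> run A c u c'"
  using run.run_step[OF run.run_refl, of A c u c'] by simp

lemma complete:
  assumes "k \<le> n" "set w \<subseteq> G" "length w = 2^(k+1)"
  shows "run (AA G n) (3*k, s) w (3*k+2, s)"
  using assms
proof (induction k arbitrary: s w)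
  case 0
  then obtain a b where w: "w = [a, b]"
    by (cases w; cases "tl w"; auto)
  have "step (AA G n) (0, s) [a] (1, s)"
    using 0 w unfolding step_def AA_def TT_def by (intro exI[of _ "Some a"] exI[of _ NoOp]) auto
  moreover have "step (AA G n) (1, s) [b] (2, s)"
    using 0 w unfolding step_def AA_def TT_def by (intro exI[of _ "Some b"] exI[of _ NoOp]) auto
  ultimately have "run (AA G n) (0, s) ([a] @ [b]) (2, s)"
    by (metis run_single run_trans)
  then show ?case using w by (simp add: numeral_2_eq_2)
next
  case (Suc k)
  define w1 where "w1 = take (2^(k+1)) w"
  define w2 where "w2 = drop (2^(k+1)) w"
  have w: "w = w1 @ w2" unfolding w1_def w2_def by simp
  have l1: "length w1 = 2^(k+1)" "length w2 = 2^(k+1)"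
    using Suc.prems unfolding w1_def w2_def by auto
  have s1: "set w1 \<subseteq> G" "set w2 \<subseteq> G" using Suc.prems w by auto
  have k: "k < n" "k \<le> n" using Suc.prems by auto
  have r1: "run (AA G n) (3*k, 0#s) w1 (3*k+2, 0#s)" using Suc.IH k l1 s1 by blast
  have r2: "run (AA G n) (3*k, 1#s) w2 (3*k+2, 1#s)" using Suc.IH k l1 s1 by blast
  have t1: "step (AA G n) (3*Suc k, s) [] (3*k, 0#s)"
    using k unfolding step_def AA_def TT_def
    by (intro exI[of _ None] exI[of _ "Push 0"]) auto
  have t2: "step (AA G n) (3*k+2, 0#s) [] (3*Suc k+1, s)"
    using k unfolding step_def AA_def TT_def
    by (intro exI[of _ None] exI[of _ "Pop 0"]) auto
  have t3: "step (AA G n) (3*Suc k+1, s) [] (3*k, 1#s)"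
    using k unfolding step_def AA_def TT_def
    by (intro exI[of _ None] exI[of _ "Push 1"]) auto
  have t4: "step (AA G n) (3*k+2, 1#s) [] (3*Suc k+2, s)"
    using k unfolding step_def AA_def TT_def
    by (intro exI[of _ None] exI[of _ "Pop 1"]) auto
  have "run (AA G n) (3*Suc k, s) ((((([] @ w1) @ []) @ []) @ w2) @ []) (3*Suc k+2, s)"
    by (rule run_trans[OF run_single[OF t4] run_trans[OF r2 run_trans[OF run_single[OF t3]
        run_trans[OF run_single[OF t2] run_trans[OF r1 run_single[OF t1]]]]]])
  then show ?case using w by simp
qed

definition inv :: "'a set \<Rightarrow> nat \<Rightarrow> nat \<times> nat list \<Rightarrow> 'a list \<Rightarrow> bool" where
  "inv G n c w \<longleftrightarrow> set w \<subseteq> G \<and> (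
     (\<exists>j\<le>n. fst c = 3*j \<and> length (snd c) = n-j \<and> length w = vv j (snd c)) \<or>
     (fst c = 1 \<and> length (snd c) = n \<and> length w = vv 0 (snd c) + 1) \<or>
     (\<exists>j\<le>n. fst c = 3*j+2 \<and> length (snd c) = n-j \<and> length w = vv j (snd c) + 2^(j+1)) \<or>
     (\<exists>k. 1 \<le> k \<and> k \<le> n \<and> fst c = 3*k+1 \<and> length (snd c) = n-k \<and>
          length w = vv k (snd c) + 2^k))"

lemma inv_s: "inv G n (3*j, s) w \<Longrightarrow> j \<le> n \<and> length s = n-j \<and> length w = vv j s \<and> set w \<subseteq> G"
  unfolding inv_def by (auto; presburger)

lemma inv_t: "inv G n (3*j+2, s) w \<Longrightarrow> j \<le> n \<and> length s = n-j \<and> length w = vv j s + 2^(j+1) \<and> set w \<subseteq> G"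
  unfolding inv_def by (auto; presburger)

lemma inv_x: "1 \<le> k \<Longrightarrow> inv G n (3*k+1, s) w \<Longrightarrow> k \<le> n \<and> length s = n-k \<and> length w = vv k s + 2^k \<and> set w \<subseteq> G"
  unfolding inv_def by (auto; presburger)

lemma inv_step:
  assumes "inv G n c w" "step (AA G n) c u c'"
  shows "inv G n c' (w @ u)"
proof -
  obtain q s where c: "c = (q, s)" by fastforce
  obtain q' s' where c': "c' = (q', s')" by fastforce
  from assms(2) obtain l op where tr: "(q, l, op, q') \<in> TT G n"
    and u: "u = (case l of None \<Rightarrow> [] | Some a \<Rightarrow> [a])" and ap: "apply_op op s s'"
    unfolding step_def AA_def c c' by auto
  have I: "set w \<subseteq> G \<and> (
     (\<exists>j\<le>n. q = 3*j \<and> length s = n-j \<and> length w = vv j s) \<or>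
     (q = 1 \<and> length s = n \<and> length w = vv 0 s + 1) \<or>
     (\<exists>j\<le>n. q = 3*j+2 \<and> length s = n-j \<and> length w = vv j s + 2^(j+1)) \<or>
     (\<exists>k. 1 \<le> k \<and> k \<le> n \<and> q = 3*k+1 \<and> length s = n-k \<and>
          length w = vv k s + 2^k))" using assms(1) unfolding inv_def c by simp
  show ?thesis
    using tr unfolding TT_def
  proof (elim UnE imageE)
    fix a assume "(q, l, op, q') = (0, Some a, NoOp, 1)" "a \<in> G"
    then show ?thesis using I u ap unfolding c' inv_def fst_conv snd_conv by (auto; presburger)
  next
    fix a assume "(q, l, op, q') = (1, Some a, NoOp, 2)" "a \<in> G"
    then show ?thesis using I u ap unfolding c' inv_def fst_conv snd_conv by (auto; presburger)
  next
    fix k assume h: "(q, l, op, q') = (3*(k+1), None, Push 0, 3*k)" "k \<in> {..<n}"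
    have "inv G n (3*(k+1), s) w" using assms(1) c h by simp
    from inv_s[OF this] h u ap show ?thesis unfolding c' inv_def
      by (intro conjI disjI1 exI[of _ k]) auto
  next
    fix k assume h: "(q, l, op, q') = (3*k+2, None, Pop 0, 3*(k+1)+1)" "k \<in> {..<n}"
    have "inv G n (3*k+2, s) w" using assms(1) c h by simp
    from inv_t[OF this] h u ap show ?thesis unfolding c' inv_def
      by (intro conjI disjI2 exI[of _ "k+1"]) auto
  next
    fix k assume h: "(q, l, op, q') = (3*(k+1)+1, None, Push 1, 3*k)" "k \<in> {..<n}"
    have "inv G n (3*(k+1)+1, s) w" using assms(1) c h by simp
    from inv_x[OF _ this] h u ap show ?thesis unfolding c' inv_def
      by (intro conjI disjI1 exI[of _ k]) auto
  next
    fix k assume h: "(q, l, op, q') = (3*k+2, None, Pop 1, 3*(k+1)+2)" "k \<in> {..<n}"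
    have "inv G n (3*k+2, s) w" using assms(1) c h by simp
    from inv_t[OF this] h u ap show ?thesis unfolding c' inv_def
      by (intro conjI disjI2 disjI1 exI[of _ "k+1"]) auto
  qed
qed

lemma inv_run0:
  assumes "run (AA G n) c0 w c" "c0 = (3*n, [])"
  shows "inv G n c w"
  using assms
proof (induction rule: run.induct)
  case (run_refl) then show ?case unfolding inv_def by auto
next
  case (run_step c w c' u c'') then show ?case using inv_step by blast
qed

lemma inv_run: "run (AA G n) (3*n, []) w c \<Longrightarrow> inv G n c w"
  using inv_run0 by blast

lemma inv_len: "inv G n c w \<Longrightarrow> length (snd c) \<le> n"
  unfolding inv_def by auto

theorem claim4p6:
  fixes \<Gamma> :: "'a set" and n :: nat
  assumes "finite \<Gamma>"
  shows "\<exists>A :: (nat, 'a, nat) pda.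
           wf_pda A \<and> input A = \<Gamma> \<and>
           card (states A) = 3 * n + 3 \<and> card (stack_alph A) = 2 \<and>
           stack_bounded A n \<and>
           lang A = {w. set w \<subseteq> \<Gamma> \<and> length w = 2 ^ (n + 1)}"
proof (intro exI[of _ "AA \<Gamma> n"] conjI)
  show "wf_pda (AA \<Gamma> n)"
    using assms unfolding wf_pda_def AA_def TT_def by auto
  show "input (AA \<Gamma> n) = \<Gamma>" by (simp add: AA_def)
  show "card (states (AA \<Gamma> n)) = 3 * n + 3" by (simp add: AA_def)
  show "card (stack_alph (AA \<Gamma> n)) = 2" by (simp add: AA_def)
  show "stack_bounded (AA \<Gamma> n) n"
    unfolding stack_bounded_def using inv_run inv_len by (fastforce simp: AA_def)
  show "lang (AA \<Gamma> n) = {w. set w \<subseteq> \<Gamma> \<and> length w = 2 ^ (n + 1)}"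
  proof
    show "lang (AA \<Gamma> n) \<subseteq> {w. set w \<subseteq> \<Gamma> \<and> length w = 2 ^ (n + 1)}"
    proof
      fix w assume "w \<in> lang (AA \<Gamma> n)"
      then have "run (AA \<Gamma> n) (3*n, []) w (3*n+2, [])" by (simp add: lang_def AA_def)
      then have "inv \<Gamma> n (3*n+2, []) w" by (rule inv_run)
      then have "set w \<subseteq> \<Gamma> \<and> length w = vv n [] + 2^(n+1)"
        using inv_t by fastforce
      then show "w \<in> {w. set w \<subseteq> \<Gamma> \<and> length w = 2 ^ (n + 1)}"
        by auto
    qed
    show "{w. set w \<subseteq> \<Gamma> \<and> length w = 2 ^ (n + 1)} \<subseteq> lang (AA \<Gamma> n)"
      using complete[of n n] by (auto simp: lang_def AA_def)
  qed
qed

end
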